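(* In the setting below, $C_2^\perp\subseteq C_1$, $\dim C_1-\dim C_2^\perp=k-m+s$, and every vector in $(C_1\setminus C_2^\perp)\cup(C_2\setminus C_1^\perp)$ has Hamming weight at least $\min(q-k,m)-s+1$. Consequently $\mathrm{CSS}(C_1,C_2)$ is a quantum CSS code over $\mathbb F_q$ with length $q-s$, dimension $k-m+s$ and distance at least $\min(q-k,m)-s+1$.
   Context: Let $q=2^l$ ($l\ge2$) and $\mathbb F_q$ the field with $q$ elements. Fix integers $k,m,s$ with $q/3\ge k\ge m\ge s>0$ and $2k\le q-m$. Fix $A\subseteq\mathbb F_q$ with $|A|=k$, $B\subseteq A$ with $|B|=s$, and let $M=\mathbb F_q\setminus B$. For $d\in\mathbb N$, $\mathbb F_q[x]_{<d}$ denotes the polynomials of degree $<d$ (including $0$). The evaluation map $\phi_M:\mathbb F_q[x]\to\mathbb F_q^M$ is $P\mapsto(P(\alpha))_{\alpha\in M}$. Let $C_1=\phi_M(\mathbb F_q[x]_{<k})$, $C_2^\perp=\phi_M(\{P\in\mathbb F_q[x]_{<m}:P(b)=0\ \forall b\in B\})$, and $C_2=\{v\in\mathbb F_q^M:\sum_{\alpha\in M}v_\alpha w_\alpha=0\ \forall w\in C_2^\perp\}$; $C_1^\perp$ is defined analogously. For linear codes $C_2^\perp\subseteq C_1$ in $\mathbb F_q^M$, $\mathrm{CSS}(C_1,C_2)$ is the span of the states $\sum_{\alpha\in C_2^\perp}|c+\alpha\rangle$, $c\in C_1$, its dimension is $\dim C_1-\dim C_2^\perp$ and its distance is the minimum Hamming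 weight of $(C_1\setminus C_2^\perp)\cup(C_2\setminus C_1^\perp)$. *)

theory Defs
  imports "HOL-Computational_Algebra.Polynomial" "HOL-Library.Function_Algebras" "HOL-Library.Cardinality"
begin

text \<open>Vectors of F_q^M are represented as functions 'a => 'a vanishing outside M.
  Scalar multiplication is pointwise.\<close>

definition fscale :: "'a::field \<Rightarrow> ('a \<Rightarrow> 'a) \<Rightarrow> ('a \<Rightarrow> 'a)" where
  "fscale c v = (\<lambda>x. c * v x)"

definition code_dim :: "('a::field \<Rightarrow> 'a) set \<Rightarrow> nat" where
  "code_dim C = vector_space.dim fscale C"

definition vecs_on :: "'a::field set \<Rightarrow> ('a \<Rightarrow> 'a) set" where
  "vecs_on M = {v. \<forall>x. x \<notin> M \<longrightarrow> v x = 0}"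

definition eval_map :: "'a::field set \<Rightarrow> 'a poly \<Rightarrow> ('a \<Rightarrow> 'a)" where
  "eval_map M P = (\<lambda>\<alpha>. if \<alpha> \<in> M then poly P \<alpha> else 0)"

definition polys_lt :: "nat \<Rightarrow> 'a::field poly set" where
  "polys_lt d = {P. P = 0 \<or> degree P < d}"

definition dual_code :: "'a::field set \<Rightarrow> ('a \<Rightarrow> 'a) set \<Rightarrow> ('a \<Rightarrow> 'a) set" where
  "dual_code M C = {v \<in> vecs_on M. \<forall>w \<in> C. (\<Sum>\<alpha>\<in>M. v \<alpha> * w \<alpha>) = 0}"

definition hweight :: "'a::field set \<Rightarrow> ('a \<Rightarrow> 'a) \<Rightarrow> nat" where
  "hweight M v = card {\<alpha> \<in> M. v \<alpha> \<noteq> 0}"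

definition css_dim :: "('a::field \<Rightarrow> 'a) set \<Rightarrow> ('a \<Rightarrow> 'a) set \<Rightarrow> nat" where
  "css_dim C1 C2perp = code_dim C1 - code_dim C2perp"

definition css_distance :: "'a::field set \<Rightarrow> ('a \<Rightarrow> 'a) set \<Rightarrow> ('a \<Rightarrow> 'a) set \<Rightarrow> nat" where
  "css_distance M C1 C2 =
     (let C1perp = dual_code M C1; C2perp = dual_code M C2 in
      Min (hweight M ` ((C1 - C2perp) \<union> (C2 - C1perp))))"

end

theory Submission
  imports Defs
begin

interpretation fs: vector_space "fscale :: 'a::field \<Rightarrow> ('a \<Rightarrow> 'a) \<Rightarrow> ('a \<Rightarrow> 'a)"
  by unfold_locales (auto simp: fscale_def fun_eq_iff algebra_simps)

lemma code_dim_fs: "code_dim C = fs.dim C"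
  by (simp add: code_dim_def)

lemma eval_add: "eval_map M (p + q) = eval_map M p + eval_map M q"
  by (auto simp: eval_map_def fun_eq_iff)
lemma eval_smult: "eval_map M (smult c p) = fscale c (eval_map M p)"
  by (auto simp: eval_map_def fscale_def fun_eq_iff)
lemma eval_zero[simp]: "eval_map M 0 = 0"
  by (auto simp: eval_map_def fun_eq_iff)
lemma eval_sum: "eval_map M (\<Sum>i\<in>S. f i) = (\<Sum>i\<in>S. eval_map M (f i))"
  by (induction S rule: infinite_finite_induct) (auto simp: eval_add)

lemma roots_zero:
  fixes P :: "'a::field poly"
  assumes "finite S" "\<forall>x\<in>S. poly P x = 0" "degree P < card S"
  shows "P = 0"
proof (rule ccontr)
  assume "P \<noteq> 0"
  hence "card {x. poly P x = 0} \<le> degree P" by (rule card_poly_roots_bound)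
  moreover have "card S \<le> card {x. poly P x = 0}"
    using assms \<open>P \<noteq> 0\<close> by (intro card_mono poly_roots_finite) auto
  ultimately show False using assms by linarith
qed

lemma eval_inj0:
  fixes P :: "'a::field poly"
  assumes "finite M" "eval_map M P = 0" "degree P < card M"
  shows "P = 0"
proof (rule roots_zero[of M])
  show "\<forall>x\<in>M. poly P x = 0"
  proof
    fix x assume "x \<in> M"
    have "eval_map M P x = 0" using assms by simp
    thus "poly P x = 0" using \<open>x \<in> M\<close> by (simp add: eval_map_def)
  qed
qed (use assms in auto)

definition lin :: "'a::field set \<Rightarrow> 'a poly" where
  "lin S = (\<Prod>b\<in>S. [:-b,1:])"

lemma poly_lin: "poly (lin S) x = (\<Prod>b\<in>S. x - b)"
  by (simp add: lin_def poly_prod)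
lemma degree_lin: "finite S \<Longrightarrow> degree (lin S) = card S"
  by (simp add: lin_def degree_prod_eq_sum_degree)
lemma lead_lin: "lead_coeff (lin S) = 1"
  by (simp add: lin_def lead_coeff_prod)
lemma lin_nz: "lin S \<noteq> 0"
  using lead_lin[of S] by (metis coeff_0 zero_neq_one)
lemma poly_lin_zero: "finite S \<Longrightarrow> poly (lin S) x = 0 \<longleftrightarrow> x \<in> S"
  by (simp add: poly_lin)

lemma lin_dvd:
  fixes P :: "'a::field poly"
  assumes "finite B" "\<forall>b\<in>B. poly P b = 0"
  shows "lin B dvd P"
  using assms
proof (induction B rule: finite_induct)
  case empty then show ?case by (simp add: lin_def)
next
  case (insert b B)
  then obtain R where R: "P = lin B * R" by auto
  have "poly (lin B) b \<noteq> 0" using insert by (simp add: poly_lin_zero)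
  moreover have "poly P b = 0" using insert by auto
  ultimately have "poly R b = 0" using R by simp
  then obtain R' where "R = [:-b,1:] * R'" using poly_eq_0_iff_dvd by (metis dvdE)
  moreover have "lin (insert b B) = [:-b,1:] * lin B" using insert by (simp add: lin_def)
  ultimately have "P = lin (insert b B) * R'" using R by (simp only: mult_ac)
  then show ?case by simp
qed

lemma eval_diff: "eval_map M (p - q) = eval_map M p - eval_map M q"
  by (auto simp: eval_map_def fun_eq_iff)

lemma sum_monom_coeff: "coeff (\<Sum>i<n. monom (c i) i) j = (if j < n then c j else 0)"
  by (simp add: coeff_sum)

lemma poly_sum_monoms:
  assumes "Q \<in> polys_lt n"
  shows "Q = (\<Sum>i<n. monom (coeff Q i) i)"
proof (rule poly_eqI)
  fix j
  show "coeff Q j = coeff (\<Sum>i<n. monom (coeff Q i) i) j"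
    using assms by (auto simp: sum_monom_coeff polys_lt_def coeff_eq_0)
qed

lemma degree_sum_monoms: "degree (\<Sum>i<n. monom (c i) i) \<le> n - 1"
  by (rule degree_le) (auto simp: sum_monom_coeff)

lemma dim_eval:
  fixes h :: "'a::field poly" and M :: "'a set"
  assumes M: "finite M" and h: "h \<noteq> 0" and hn: "degree h + n \<le> card M"
  shows "code_dim (eval_map M ` {h * Q | Q. Q \<in> polys_lt n}) = n"
proof -
  define V where "V = eval_map M ` {h * Q | Q. Q \<in> polys_lt n}"
  define E where "E i = eval_map M (h * monom 1 i)" for i
  have comb: "(\<Sum>i<n. fscale (c i) (E i)) = eval_map M (h * (\<Sum>i<n. monom (c i) i))" for c
  proof -
    have "(\<Sum>i<n. fscale (c i) (E i)) = eval_map M (\<Sum>i<n. smult (c i) (h * monom 1 i))"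
      by (simp add: eval_sum eval_smult E_def)
    also have "(\<Sum>i<n. smult (c i) (h * monom 1 i)) = h * (\<Sum>i<n. monom (c i) i)"
      unfolding sum_distrib_left
    proof (rule sum.cong[OF refl])
      fix i show "smult (c i) (h * monom 1 i) = h * monom (c i) i"
        by (metis mult.right_neutral mult_smult_right smult_monom)
    qed
    finally show ?thesis .
  qed
  have key: "c i = 0" if "(\<Sum>i<n. fscale (c i) (E i)) = 0" "i < n" for c i
  proof -
    let ?R = "\<Sum>i<n. monom (c i) i"
    have "degree (h * ?R) < card M"
    proof -
      have "degree (h * ?R) \<le> degree h + (n - 1)"
        using degree_mult_le[of h ?R] degree_sum_monoms[of c n] by linarith
      thus ?thesis using hn that(2) by linarith
    qed
    hence "h * ?R = 0" using eval_inj0[OF M] that comb by metis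
    hence "?R = 0" using h by simp
    hence "coeff ?R i = 0" by simp
    thus ?thesis using that(2) by (simp add: sum_monom_coeff)
  qed
  have inj: "inj_on E {..<n}"
  proof
    fix i j assume ij: "i \<in> {..<n}" "j \<in> {..<n}" "E i = E j"
    let ?D = "monom (1::'a) i - monom 1 j"
    have "eval_map M (h * ?D) = 0" using ij by (simp add: E_def right_diff_distrib eval_diff)
    moreover have "degree (h * ?D) < card M"
    proof -
      have "degree ?D \<le> max i j" using degree_diff_le_max[of "monom (1::'a) i" "monom 1 j"]
        by (simp add: degree_monom_eq)
      hence "degree (h * ?D) \<le> degree h + max i j" using degree_mult_le[of h ?D] by linarith
      thus ?thesis using hn ij by auto
    qed
    ultimately have "h * ?D = 0" using eval_inj0[OF M] by blast
    hence "monom (1::'a) i = monom 1 j" using h by simp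
    thus "i = j" by (simp add: monom_eq_iff')
  qed
  have sub: "E ` {..<n} \<subseteq> V"
  proof
    fix v assume "v \<in> E ` {..<n}"
    then obtain i where "i < n" "v = E i" by auto
    moreover have "monom 1 i \<in> polys_lt n" using \<open>i < n\<close>
      by (simp add: polys_lt_def degree_monom_eq)
    ultimately show "v \<in> V" by (auto simp: V_def E_def)
  qed
  have sp: "V \<subseteq> fs.span (E ` {..<n})"
  proof
    fix v assume "v \<in> V"
    then obtain Q where Q: "Q \<in> polys_lt n" "v = eval_map M (h * Q)" by (auto simp: V_def)
    hence "v = (\<Sum>i<n. fscale (coeff Q i) (E i))"
      using comb poly_sum_monoms[OF Q(1)] by metis
    also have "\<dots> \<in> fs.span (E ` {..<n})"
      by (intro fs.span_sum fs.span_scale fs.span_base) auto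
    finally show "v \<in> fs.span (E ` {..<n})" .
  qed
  have ind: "fs.independent (E ` {..<n})"
  proof -
    have "\<not> (\<exists>u. (\<exists>v\<in>E ` {..<n}. u v \<noteq> 0) \<and> (\<Sum>v\<in>E ` {..<n}. fscale (u v) v) = 0)"
    proof
      assume "\<exists>u. (\<exists>v\<in>E ` {..<n}. u v \<noteq> 0) \<and> (\<Sum>v\<in>E ` {..<n}. fscale (u v) v) = 0"
      then obtain u i where ui: "i < n" "u (E i) \<noteq> 0" "(\<Sum>v\<in>E ` {..<n}. fscale (u v) v) = 0" by auto
      have "(\<Sum>j<n. fscale (u (E j)) (E j)) = 0"
        using ui(3) sum.reindex[OF inj, of "\<lambda>v. fscale (u v) v"] by simp
      from key[OF this ui(1)] ui(2) show False by simp
    qed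
    thus ?thesis using fs.dependent_finite[of "E ` {..<n}"] by auto
  qed
  have "card (E ` {..<n}) = fs.dim V" by (rule fs.basis_card_eq_dim[OF sub sp ind])
  moreover have "card (E ` {..<n}) = n" using card_image[OF inj] by simp
  ultimately show ?thesis by (simp add: code_dim_def V_def)
qed

lemma lagrange_sum:
  fixes T :: "'a::field set" and Q :: "'a poly"
  assumes T: "finite T" and Q: "Q = 0 \<or> degree Q < card T - 1"
  shows "(\<Sum>\<alpha>\<in>T. poly Q \<alpha> / poly (lin (T - {\<alpha>})) \<alpha>) = 0"
proof (cases "Q = 0")
  case True then show ?thesis by simp
next
  case False
  hence dQ: "degree Q < card T - 1" using Q by simp
  define w where "w \<alpha> = poly (lin (T - {\<alpha>})) \<alpha>" for \<alpha>
  have wnz: "w \<alpha> \<noteq> 0" for \<alpha> using T by (simp add: w_def poly_lin_zero)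
  define L where "L = (\<Sum>\<alpha>\<in>T. smult (poly Q \<alpha> / w \<alpha>) (lin (T - {\<alpha>})))"
  have polyL: "poly L \<gamma> = poly Q \<gamma>" if "\<gamma> \<in> T" for \<gamma>
  proof -
    have "poly L \<gamma> = (\<Sum>\<alpha>\<in>T. poly Q \<alpha> / w \<alpha> * poly (lin (T - {\<alpha>})) \<gamma>)"
      by (simp add: L_def poly_sum)
    also have "\<dots> = poly Q \<gamma> / w \<gamma> * poly (lin (T - {\<gamma>})) \<gamma> +
        (\<Sum>\<alpha>\<in>T - {\<gamma>}. poly Q \<alpha> / w \<alpha> * poly (lin (T - {\<alpha>})) \<gamma>)"
      using that T by (simp add: sum.remove)
    also have "(\<Sum>\<alpha>\<in>T - {\<gamma>}. poly Q \<alpha> / w \<alpha> * poly (lin (T - {\<alpha>})) \<gamma>) = 0"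
      using that T by (intro sum.neutral) (auto simp: poly_lin_zero)
    finally show ?thesis using wnz[of \<gamma>] by (simp add: w_def)
  qed
  have dL: "degree L \<le> card T - 1"
    unfolding L_def
  proof (rule degree_sum_le[OF T])
    fix \<alpha> assume "\<alpha> \<in> T"
    have "degree (smult (poly Q \<alpha> / w \<alpha>) (lin (T - {\<alpha>}))) \<le> degree (lin (T - {\<alpha>}))"
      by (rule degree_smult_le)
    also have "\<dots> = card T - 1" using T \<open>\<alpha> \<in> T\<close> by (simp add: degree_lin)
    finally show "degree (smult (poly Q \<alpha> / w \<alpha>) (lin (T - {\<alpha>}))) \<le> card T - 1" .
  qed
  have "Q - L = 0"
  proof (rule roots_zero[OF T])
    show "\<forall>x\<in>T. poly (Q - L) x = 0" using polyL by simp
    have "card T \<ge> 1" using dQ by linarith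
    have "degree (Q - L) \<le> max (degree Q) (degree L)" by (rule degree_diff_le_max)
    thus "degree (Q - L) < card T" using dQ dL \<open>card T \<ge> 1\<close> by linarith
  qed
  hence QL: "Q = L" by simp
  have "coeff Q (card T - 1) = 0" using dQ by (simp add: coeff_eq_0)
  moreover have "coeff L (card T - 1) = (\<Sum>\<alpha>\<in>T. poly Q \<alpha> / w \<alpha>)"
  proof -
    have "coeff L (card T - 1) = (\<Sum>\<alpha>\<in>T. poly Q \<alpha> / w \<alpha> * coeff (lin (T - {\<alpha>})) (card T - 1))"
      by (simp add: L_def coeff_sum)
    also have "\<dots> = (\<Sum>\<alpha>\<in>T. poly Q \<alpha> / w \<alpha>)"
    proof (rule sum.cong[OF refl])
      fix \<alpha> assume "\<alpha> \<in> T"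
      have "degree (lin (T - {\<alpha>})) = card T - 1" using T \<open>\<alpha> \<in> T\<close> by (simp add: degree_lin)
      hence "coeff (lin (T - {\<alpha>})) (card T - 1) = 1" using lead_lin[of "T - {\<alpha>}"] by simp
      thus "poly Q \<alpha> / w \<alpha> * coeff (lin (T - {\<alpha>})) (card T - 1) = poly Q \<alpha> / w \<alpha>" by simp
    qed
    finally show ?thesis .
  qed
  ultimately show ?thesis using QL by (simp add: w_def)
qed

theorem proposition5p6:
  fixes l k m s :: nat
    and A B :: "'a::{field,finite} set"
  assumes q: "CARD('a) = 2 ^ l" and l2: "l \<ge> 2"
    and k3: "3 * k \<le> CARD('a)" and km: "k \<ge> m" and ms: "m \<ge> s" and s0: "s > 0"
    and k2: "2 * k \<le> CARD('a) - m"
    and A: "card A = k" and B: "B \<subseteq> A" "card B = s"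
  defines "M \<equiv> UNIV - B"
  defines "C1 \<equiv> eval_map M ` polys_lt k"
  defines "C2perp \<equiv> eval_map M ` {P \<in> polys_lt m. \<forall>b\<in>B. poly P b = 0}"
  defines "C2 \<equiv> dual_code M C2perp"
  defines "C1perp \<equiv> dual_code M C1"
  shows "C2perp \<subseteq> C1
    \<and> code_dim C1 - code_dim C2perp = k - m + s
    \<and> (\<forall>v \<in> (C1 - C2perp) \<union> (C2 - C1perp). hweight M v \<ge> min (CARD('a) - k) m - s + 1)
    \<and> card M = CARD('a) - s
    \<and> css_dim C1 C2perp = k - m + s
    \<and> css_distance M C1 C2 \<ge> min (CARD('a) - k) m - s + 1"
proof -
  define q where "q = CARD('a)"
  have finB: "finite B" by simp
  have finM: "finite M" by simp
  have cardM: "card M = q - s" unfolding M_def q_def using B by (simp add: card_Diff_subset)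
  have minq: "min (CARD('a) - k) m = m" using k3 km by simp
  define g where "g = lin B"
  have dg: "degree g = s" using B by (simp add: g_def degree_lin)
  have gnz: "g \<noteq> 0" by (simp add: g_def lin_nz)
  have polyg: "poly g \<alpha> \<noteq> 0" if "\<alpha> \<in> M" for \<alpha> using that by (simp add: g_def poly_lin_zero M_def)
  have polygB: "poly g b = 0" if "b \<in> B" for b using that by (simp add: g_def poly_lin_zero)
  have C2set: "{P \<in> polys_lt m. \<forall>b\<in>B. poly P b = 0} = {g * Q | Q. Q \<in> polys_lt (m - s)}"
  proof (intro equalityI subsetI)
    fix P assume P: "P \<in> {P \<in> polys_lt m. \<forall>b\<in>B. poly P b = 0}"
    hence "g dvd P" unfolding g_def by (intro lin_dvd) auto
    then obtain Q where Q: "P = g * Q" by auto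
    have "Q \<in> polys_lt (m - s)"
    proof (cases "Q = 0")
      case False
      hence "degree P = s + degree Q" using Q gnz dg by (simp add: degree_mult_eq)
      moreover have "degree P < m" using P False Q gnz by (auto simp: polys_lt_def)
      ultimately have "degree Q < m - s" by linarith
      thus ?thesis by (simp add: polys_lt_def)
    qed (simp add: polys_lt_def)
    thus "P \<in> {g * Q | Q. Q \<in> polys_lt (m - s)}" using Q by auto
  next
    fix P assume "P \<in> {g * Q | Q. Q \<in> polys_lt (m - s)}"
    then obtain Q where Q: "P = g * Q" "Q \<in> polys_lt (m - s)" by auto
    have "P \<in> polys_lt m"
    proof (cases "Q = 0")
      case False
      hence "degree P = s + degree Q" using Q gnz dg by (simp add: degree_mult_eq)
      thus ?thesis using Q False ms by (auto simp: polys_lt_def)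
    qed (simp add: polys_lt_def Q)
    moreover have "\<forall>b\<in>B. poly P b = 0" using Q polygB by simp
    ultimately show "P \<in> {P \<in> polys_lt m. \<forall>b\<in>B. poly P b = 0}" by simp
  qed
  have C2p: "C2perp = eval_map M ` {g * Q | Q. Q \<in> polys_lt (m - s)}"
    unfolding C2perp_def C2set ..
  have C1s: "C1 = eval_map M ` {1 * Q | Q. Q \<in> polys_lt k}"
    unfolding C1_def by simp
  have dimC1: "code_dim C1 = k" unfolding C1s
    by (rule dim_eval[OF finM]) (use cardM k3 km ms in \<open>auto simp: q_def\<close>)
  have dimC2: "code_dim C2perp = m - s" unfolding C2p
    by (rule dim_eval[OF finM gnz]) (use cardM k3 km ms dg in \<open>auto simp: q_def\<close>)
  have sub: "C2perp \<subseteq> C1"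
    unfolding C2perp_def C1_def using km by (auto simp: polys_lt_def)
  have zC2: "0 \<in> C2perp" unfolding C2perp_def
    by (rule image_eqI[of _ _ 0]) (auto simp: polys_lt_def)
  have zC1p: "0 \<in> C1perp" by (simp add: C1perp_def dual_code_def vecs_on_def)
  have w1: "hweight M v \<ge> m - s + 1" if vin: "v \<in> C1 - C2perp" for v
  proof -
    obtain P where P: "P \<in> polys_lt k" "v = eval_map M P" using vin by (auto simp: C1_def)
    have "P \<noteq> 0" using vin P zC2 by auto
    hence dP: "degree P < k" using P by (simp add: polys_lt_def)
    define W where "W = {\<alpha> \<in> M. poly P \<alpha> \<noteq> 0}"
    define Z where "Z = {\<alpha> \<in> M. poly P \<alpha> = 0}"
    have "card Z \<le> card {x. poly P x = 0}"
      using \<open>P \<noteq> 0\<close> by (intro card_mono poly_roots_finite) (auto simp: Z_def)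
    also have "\<dots> \<le> degree P" using \<open>P \<noteq> 0\<close> by (rule card_poly_roots_bound)
    finally have cZ: "card Z \<le> k - 1" using dP by linarith
    have "card M = card W + card Z"
    proof -
      have "M = W \<union> Z" "W \<inter> Z = {}" by (auto simp: W_def Z_def)
      thus ?thesis using finM by (metis card_Un_disjoint finite_Un)
    qed
    moreover have "hweight M v = card W"
      unfolding hweight_def W_def P(2) by (rule arg_cong[where f=card]) (auto simp: eval_map_def)
    ultimately show ?thesis using cZ cardM k3 km ms s0 unfolding q_def by linarith
  qed
  have w2: "hweight M v \<ge> m - s + 1" if vin: "v \<in> C2 - C1perp" for v
  proof (rule ccontr)
    assume neg: "\<not> hweight M v \<ge> m - s + 1"
    have vC2: "v \<in> vecs_on M" "\<forall>w\<in>C2perp. (\<Sum>\<alpha>\<in>M. v \<alpha> * w \<alpha>) = 0"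
      using vin by (auto simp: C2_def dual_code_def)
    have "v \<noteq> 0" using vin zC1p by auto
    then obtain a0 where "v a0 \<noteq> 0" by (auto simp: fun_eq_iff)
    hence a0M: "a0 \<in> M" using vC2(1) by (auto simp: vecs_on_def)
    define S where "S = {\<alpha> \<in> M. v \<alpha> \<noteq> 0}"
    have a0S: "a0 \<in> S" using a0M \<open>v a0 \<noteq> 0\<close> by (simp add: S_def)
    have finS: "finite S" by simp
    have cS: "card S \<le> m - s" using neg by (simp add: hweight_def S_def)
    define Q where "Q = lin (S - {a0})"
    have dQ: "degree Q = card S - 1" using finS a0S by (simp add: Q_def degree_lin)
    have "card S \<ge> 1" using a0S finS by (metis One_nat_def Suc_leI card_gt_0_iff empty_iff)
    hence "degree Q < m - s" using dQ cS by linarith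
    hence "Q \<in> polys_lt (m - s)" by (simp add: polys_lt_def)
    hence wC: "eval_map M (g * Q) \<in> C2perp" unfolding C2p by blast
    have "(\<Sum>\<alpha>\<in>M. v \<alpha> * eval_map M (g * Q) \<alpha>) = (\<Sum>\<alpha>\<in>M. v \<alpha> * poly (g * Q) \<alpha>)"
      by (rule sum.cong) (auto simp: eval_map_def)
    also have "\<dots> = v a0 * poly (g * Q) a0 + (\<Sum>\<alpha>\<in>M - {a0}. v \<alpha> * poly (g * Q) \<alpha>)"
      using a0M finM by (simp add: sum.remove)
    also have "(\<Sum>\<alpha>\<in>M - {a0}. v \<alpha> * poly (g * Q) \<alpha>) = 0"
    proof (rule sum.neutral, rule ballI)
      fix \<alpha> assume "\<alpha> \<in> M - {a0}"
      show "v \<alpha> * poly (g * Q) \<alpha> = 0"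
      proof (cases "v \<alpha> = 0")
        case False
        hence "\<alpha> \<in> S - {a0}" using \<open>\<alpha> \<in> M - {a0}\<close> by (auto simp: S_def)
        hence "poly Q \<alpha> = 0" using finS by (simp add: Q_def poly_lin_zero)
        thus ?thesis by simp
      qed simp
    qed
    finally have "(\<Sum>\<alpha>\<in>M. v \<alpha> * eval_map M (g * Q) \<alpha>) = v a0 * poly (g * Q) a0" by simp
    moreover have "poly Q a0 \<noteq> 0" using finS by (simp add: Q_def poly_lin_zero)
    ultimately have "(\<Sum>\<alpha>\<in>M. v \<alpha> * eval_map M (g * Q) \<alpha>) \<noteq> 0"
      using polyg[OF a0M] \<open>v a0 \<noteq> 0\<close> by simp
    thus False using vC2(2) wC by blast
  qed
  obtain T where T: "T \<subseteq> M" "card T = m - s + 1" "finite T"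
    using obtain_subset_with_card_n[of "m - s + 1" M] cardM k3 km ms s0 unfolding q_def by force
  obtain a0 where a0: "a0 \<in> T" using T by (metis card_0_eq empty_iff ex_in_conv nat.distinct(1) add_is_0 one_neq_zero)
  define v where "v \<alpha> = (if \<alpha> \<in> T then 1 / (poly g \<alpha> * poly (lin (T - {\<alpha>})) \<alpha>) else 0)" for \<alpha>
  have vT: "(\<Sum>\<alpha>\<in>M. v \<alpha> * f \<alpha>) = (\<Sum>\<alpha>\<in>T. v \<alpha> * f \<alpha>)" for f
    by (rule sum.mono_neutral_right) (use T finM in \<open>auto simp: v_def\<close>)
  have vC2: "v \<in> C2"
    unfolding C2_def dual_code_def
  proof (intro CollectI conjI ballI)
    show "v \<in> vecs_on M" using T by (auto simp: vecs_on_def v_def)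
    fix w assume "w \<in> C2perp"
    then obtain Q where Q: "Q \<in> polys_lt (m - s)" "w = eval_map M (g * Q)" unfolding C2p by blast
    have "(\<Sum>\<alpha>\<in>M. v \<alpha> * w \<alpha>) = (\<Sum>\<alpha>\<in>T. v \<alpha> * w \<alpha>)" by (rule vT)
    also have "\<dots> = (\<Sum>\<alpha>\<in>T. poly Q \<alpha> / poly (lin (T - {\<alpha>})) \<alpha>)"
    proof (rule sum.cong[OF refl])
      fix \<alpha> assume "\<alpha> \<in> T"
      hence "\<alpha> \<in> M" using T by auto
      thus "v \<alpha> * w \<alpha> = poly Q \<alpha> / poly (lin (T - {\<alpha>})) \<alpha>"
        using \<open>\<alpha> \<in> T\<close> polyg[OF \<open>\<alpha> \<in> M\<close>] Q(2) by (simp add: v_def eval_map_def)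
    qed
    also have "\<dots> = 0"
      by (rule lagrange_sum[OF T(3)]) (use Q(1) T(2) in \<open>auto simp: polys_lt_def\<close>)
    finally show "(\<Sum>\<alpha>\<in>M. v \<alpha> * w \<alpha>) = 0" .
  qed
  have vnC1p: "v \<notin> C1perp"
  proof
    assume "v \<in> C1perp"
    define P where "P = lin (T - {a0})"
    have "degree P = m - s" using T a0 by (simp add: P_def degree_lin)
    hence "degree P < k" using s0 km ms by linarith
    hence "P \<in> polys_lt k" by (simp add: polys_lt_def)
    hence PC1: "eval_map M P \<in> C1" by (simp add: C1_def)
    have "(\<Sum>\<alpha>\<in>M. v \<alpha> * eval_map M P \<alpha>) = (\<Sum>\<alpha>\<in>T. v \<alpha> * eval_map M P \<alpha>)" by (rule vT)
    also have "\<dots> = v a0 * eval_map M P a0 + (\<Sum>\<alpha>\<in>T - {a0}. v \<alpha> * eval_map M P \<alpha>)"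
      using a0 T by (simp add: sum.remove)
    also have "(\<Sum>\<alpha>\<in>T - {a0}. v \<alpha> * eval_map M P \<alpha>) = 0"
      using T by (intro sum.neutral) (auto simp: P_def eval_map_def poly_lin_zero)
    finally have "(\<Sum>\<alpha>\<in>M. v \<alpha> * eval_map M P \<alpha>) = v a0 * eval_map M P a0" by simp
    also have "\<dots> \<noteq> 0"
    proof -
      have "a0 \<in> M" using a0 T by auto
      have "poly P a0 \<noteq> 0" using T by (simp add: P_def poly_lin_zero)
      thus ?thesis using \<open>a0 \<in> M\<close> a0 polyg[OF \<open>a0 \<in> M\<close>] by (simp add: v_def eval_map_def P_def)
    qed
    finally show False using \<open>v \<in> C1perp\<close> PC1 by (auto simp: C1perp_def dual_code_def)
  qed
  have wall: "\<forall>v \<in> (C1 - C2perp) \<union> (C2 - C1perp). hweight M v \<ge> m - s + 1"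
    using w1 w2 by blast
  have dist: "css_distance M C1 C2 \<ge> m - s + 1"
  proof -
    define X where "X = (C1 - dual_code M C2) \<union> (C2 - C1perp)"
    have "C2perp \<subseteq> dual_code M C2"
      by (auto simp: C2_def dual_code_def C2perp_def vecs_on_def eval_map_def mult.commute)
    hence XS: "X \<subseteq> (C1 - C2perp) \<union> (C2 - C1perp)" by (auto simp: X_def)
    have "v \<in> X" using vC2 vnC1p by (simp add: X_def)
    hence ne: "hweight M ` X \<noteq> {}" by auto
    have "css_distance M C1 C2 = Min (hweight M ` X)"
      by (simp add: css_distance_def X_def C1perp_def Let_def)
    also have "m - s + 1 \<le> Min (hweight M ` X)"
      using ne XS wall by (subst Min_ge_iff) auto
    finally show ?thesis by simp
  qed
  show ?thesis
    using sub dimC1 dimC2 wall cardM dist minq ms km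
    by (simp add: q_def css_dim_def)
qed

end
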